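(* Let $Z=(Z^i)_{i\in\mathbf{I}}$ be a time homogeneous counting process with generic intensities $\phi^i$, and for each $i$ let $\mathbf{V}^i=\{v^i_k,k\in\mathbb{N}\}$ be a coherent family of neighborhoods which is increasing ($v^i_k\subset v^i_{k+1}$ for all $k$). Let $\mathcal{Y}\subset\mathcal{X}$ be such that $$\sup_{i\in\mathbf{I}}\ \sup_{x,y\in\mathcal{Y}:\,x\overset{v^i_k}{=}y}|\phi^i(x)-\phi^i(y)|\to 0\quad (k\to\infty).$$ Define $\Delta^i_{v^i_0}(x)=\inf\{\phi^i(y):y\in\mathcal{Y},\,y\overset{v^i_0}{=}x\}$ and, for $k>0$, $\Delta^i_{v^i_k}(x)=\inf\{\phi^i(y):y\in\mathcal{Y},\,y\overset{v^i_k}{=}x\}-\inf\{\phi^i(y):y\in\mathcal{Y},\,y\overset{v^i_{k-1}}{=}x\}$. Then for any probabilities $\lambda^i$ on $\mathbf{V}^i$ such that $\lambda^i(v)=0$ only if $\sup_{x\in\mathcal{X}\cap\mathcal{Y}}\Delta^i_v(x)=0$, the process $(Z^i)$ admits the Kalikow decomposition with respect to $(\mathbf{V}^i)_{i\in\mathbf{I}}$ and $\mathcal{Y}$, with weights $\lambda^i(v)$ and cylindrical functions $\phi^i_v=\Delta^i_v/\lambda^i(v)$ (convention $0/0=0$).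
   Context: $\mathbf{I}$ is countable; $\mathcal{X}$ is the set of configurations $x=(\{t^i_n\}_n)_{i\in\mathbf{I}}$ of locally finite point sets in $(-\infty,0)$. A neighborhood is a Borel subset $v\subset\mathbf{I}\times(-\infty,0)$, finite if contained in $J\times[a,b]$ with $J$ finite; $x\overset{v}{=}y$ means $x,y$ have the same points in $v$; $f$ is cylindrical on $v$ if $f(x)=f(y)$ whenever $x\overset{v}{=}y$. A time homogeneous counting process with generic intensity $\phi^i:\mathcal{X}\to\mathbb{R}_+$ has stochastic intensity at time $t$ equal to $\phi^i$ of the past configuration before $t$ shifted so that $t$ becomes $0$. If $\mathcal{V}^i$ is the minimal subset of $\mathbf{I}\times(-\infty,0)$ on which $\phi^i$ is cylindrical, a countable family $\mathbf{V}^i$ of finite neighborhoods is coherent if $\mathcal{V}^i\subset\bigcup_{v\in\mathbf{V}^i}v$. Kalikow decomposition w.r.t. $(\mathbf{V}^i)$ and $\mathcal{Y}$: for each $i$ a probability $\lambda^i$ on $\mathbf{V}^i$ and functions $\phi^i_v\ge0$ cylindrical on $v$ with $\phi^i(x)=\sum_{v}\lambda^i(v)\phi^i_v(x)$ for all $x\in\mathcal{X}\cap\mathcal{Y}$. *)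

theory Defs
  imports "HOL-Analysis.Analysis"
begin

type_synonym 'i config = "'i \<Rightarrow> real set"

definition config_space :: "'i config set" where
  "config_space = {x. \<forall>i. x i \<subseteq> {..<0} \<and> (\<forall>a b. finite (x i \<inter> {a..b}))}"

definition agree_on :: "('i \<times> real) set \<Rightarrow> 'i config \<Rightarrow> 'i config \<Rightarrow> bool" where
  "agree_on v x y \<longleftrightarrow> (\<forall>(j,t)\<in>v. (t \<in> x j \<longleftrightarrow> t \<in> y j))"

definition finite_nbhd :: "('i \<times> real) set \<Rightarrow> bool" where
  "finite_nbhd v \<longleftrightarrow> v \<subseteq> UNIV \<times> {..<0} \<and> (\<forall>j. {t. (j,t) \<in> v} \<in> sets borel)
     \<and> (\<exists>J a b. finite J \<and> v \<subseteq> J \<times> {a..b})"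

definition cylindrical_on :: "('i config \<Rightarrow> real) \<Rightarrow> ('i \<times> real) set \<Rightarrow> bool" where
  "cylindrical_on f v \<longleftrightarrow>
     (\<forall>x\<in>config_space. \<forall>y\<in>config_space. agree_on v x y \<longrightarrow> f x = f y)"

text \<open>The minimal subset of I x (-inf,0) on which f is cylindrical (when it exists it is
  the intersection of all such subsets).\<close>

definition dependence_set :: "('i config \<Rightarrow> real) \<Rightarrow> ('i \<times> real) set" where
  "dependence_set f = \<Inter>{v. v \<subseteq> UNIV \<times> {..<0} \<and> cylindrical_on f v}"

definition coherent :: "('i config \<Rightarrow> real) \<Rightarrow> (nat \<Rightarrow> ('i \<times> real) set) \<Rightarrow> bool" where
  "coherent f V \<longleftrightarrow> (\<forall>k. finite_nbhd (V k)) \<and> dependence_set f \<subseteq> (\<Union>k. V k)"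

text \<open>Kalikow decomposition of the generic intensities phi w.r.t. the families V i and Y,
  with weights lam i k on the neighborhood V i k and functions phiv i k.\<close>

definition kalikow_decomposition ::
  "('i \<Rightarrow> 'i config \<Rightarrow> real) \<Rightarrow> ('i \<Rightarrow> nat \<Rightarrow> ('i \<times> real) set) \<Rightarrow> 'i config set
   \<Rightarrow> ('i \<Rightarrow> nat \<Rightarrow> real) \<Rightarrow> ('i \<Rightarrow> nat \<Rightarrow> 'i config \<Rightarrow> real) \<Rightarrow> bool" where
  "kalikow_decomposition phi V Y lam phiv \<longleftrightarrow>
     (\<forall>i. (\<forall>k. 0 \<le> lam i k) \<and> lam i sums 1
        \<and> (\<forall>k. cylindrical_on (phiv i k) (V i k) \<and> (\<forall>x\<in>config_space. 0 \<le> phiv i k x))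
        \<and> (\<forall>x\<in>config_space \<inter> Y. (\<lambda>k. lam i k * phiv i k x) sums phi i x))"

text \<open>Convention: outside the configurations for which this set is nonempty, Delta is set to 0
  (there the informal definition involves an infimum over the empty set).\<close>

definition inf_nbhd ::
  "('i \<Rightarrow> 'i config \<Rightarrow> real) \<Rightarrow> ('i \<Rightarrow> nat \<Rightarrow> ('i \<times> real) set) \<Rightarrow> 'i config set
   \<Rightarrow> 'i \<Rightarrow> nat \<Rightarrow> 'i config \<Rightarrow> real" where
  "inf_nbhd phi V Y i k x = Inf (phi i ` {y \<in> Y. agree_on (V i k) y x})"

fun Delta ::
  "('i \<Rightarrow> 'i config \<Rightarrow> real) \<Rightarrow> ('i \<Rightarrow> nat \<Rightarrow> ('i \<times> real) set) \<Rightarrow> 'i config set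
   \<Rightarrow> 'i \<Rightarrow> nat \<Rightarrow> 'i config \<Rightarrow> real" where
  "Delta phi V Y i 0 x =
     (if {y \<in> Y. agree_on (V i 0) y x} = {} then 0 else inf_nbhd phi V Y i 0 x)"
| "Delta phi V Y i (Suc k) x =
     (if {y \<in> Y. agree_on (V i (Suc k)) y x} = {} then 0
      else inf_nbhd phi V Y i (Suc k) x - inf_nbhd phi V Y i k x)"

end

theory Submission
  imports Defs
begin

lemma agree_on_mono: "v \<subseteq> w \<Longrightarrow> agree_on w y x \<Longrightarrow> agree_on v y x"
  unfolding agree_on_def by blast

lemma agree_on_refl: "agree_on v x x"
  unfolding agree_on_def by auto

lemma agree_on_trans_iff: "agree_on v x y \<Longrightarrow> agree_on v z x = agree_on v z y"
  unfolding agree_on_def by auto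

theorem mainTheorem3:
  fixes phi :: "'i::countable \<Rightarrow> 'i config \<Rightarrow> real"
    and V :: "'i \<Rightarrow> nat \<Rightarrow> ('i \<times> real) set"
    and Y :: "'i config set"
    and lam :: "'i \<Rightarrow> nat \<Rightarrow> real"
  assumes phi_nonneg: "\<And>i x. x \<in> config_space \<Longrightarrow> 0 \<le> phi i x"
    and coh: "\<And>i. coherent (phi i) (V i)"
    and incr: "\<And>i k. V i k \<subseteq> V i (Suc k)"
    and Y_sub: "Y \<subseteq> config_space"
    and unif: "\<And>\<epsilon>. \<epsilon> > 0 \<Longrightarrow> \<exists>K. \<forall>k\<ge>K. \<forall>i. \<forall>x\<in>Y. \<forall>y\<in>Y.
                   agree_on (V i k) x y \<longrightarrow> \<bar>phi i x - phi i y\<bar> \<le> \<epsilon>"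
    and lam_nonneg: "\<And>i k. 0 \<le> lam i k"
    and lam_prob: "\<And>i. lam i sums 1"
    and lam_zero: "\<And>i k. lam i k = 0 \<Longrightarrow>
                     (SUP x\<in>config_space \<inter> Y. ereal (Delta phi V Y i k x)) = 0"
  shows "kalikow_decomposition phi V Y lam (\<lambda>i k x. Delta phi V Y i k x / lam i k)"
proof -
  have bdd: "bdd_below (phi i ` {y \<in> Y. agree_on (V i k) y x})" for i k x
    using phi_nonneg Y_sub by (auto intro!: bdd_belowI[where m=0])
  have Dnonneg: "0 \<le> Delta phi V Y i k x" for i k x
  proof (cases k)
    case 0
    show ?thesis
    proof (cases "{y \<in> Y. agree_on (V i 0) y x} = {}")
      case False
      then have "0 \<le> inf_nbhd phi V Y i 0 x" unfolding inf_nbhd_def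
        using phi_nonneg Y_sub by (intro cInf_greatest) auto
      then show ?thesis using 0 False by simp
    qed (simp add: 0)
  next
    case (Suc m)
    show ?thesis
    proof (cases "{y \<in> Y. agree_on (V i (Suc m)) y x} = {}")
      case False
      have sub: "{y \<in> Y. agree_on (V i (Suc m)) y x} \<subseteq> {y \<in> Y. agree_on (V i m) y x}"
        using agree_on_mono[OF incr] by blast
      have "inf_nbhd phi V Y i m x \<le> inf_nbhd phi V Y i (Suc m) x" unfolding inf_nbhd_def
        using False sub bdd by (intro cInf_superset_mono) auto
      then show ?thesis using Suc False by simp
    qed (simp add: Suc)
  qed
  have Dcyl: "Delta phi V Y i k x = Delta phi V Y i k y" if "agree_on (V i k) x y" for i k x y
  proof (cases k)
    case 0
    have e: "{z \<in> Y. agree_on (V i 0) z x} = {z \<in> Y. agree_on (V i 0) z y}"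
      using agree_on_trans_iff[OF that[unfolded 0]] by auto
    show ?thesis unfolding 0 Delta.simps inf_nbhd_def e ..
  next
    case (Suc m)
    have a: "agree_on (V i m) x y" using agree_on_mono[OF incr] that Suc by blast
    have e1: "{z \<in> Y. agree_on (V i (Suc m)) z x} = {z \<in> Y. agree_on (V i (Suc m)) z y}"
      using agree_on_trans_iff[OF that[unfolded Suc]] by auto
    have e2: "{z \<in> Y. agree_on (V i m) z x} = {z \<in> Y. agree_on (V i m) z y}"
      using agree_on_trans_iff[OF a] by auto
    show ?thesis unfolding Suc Delta.simps inf_nbhd_def e1 e2 ..
  qed
  have tele: "(\<Sum>k<Suc n. Delta phi V Y i k x) = inf_nbhd phi V Y i n x" if "x \<in> Y" for i n x
  proof (induction n)
    case 0
    have "x \<in> {y \<in> Y. agree_on (V i 0) y x}" using that agree_on_refl by auto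
    then show ?case by auto
  next
    case (Suc n)
    have "x \<in> {y \<in> Y. agree_on (V i (Suc n)) y x}" using that agree_on_refl by auto
    then have "Delta phi V Y i (Suc n) x = inf_nbhd phi V Y i (Suc n) x - inf_nbhd phi V Y i n x"
      by auto
    then show ?case using Suc by simp
  qed
  have conv: "(\<lambda>n. inf_nbhd phi V Y i n x) \<longlonglongrightarrow> phi i x" if "x \<in> Y" for i x
  proof (rule LIMSEQ_I)
    fix r :: real assume r: "0 < r"
    obtain K where K: "\<forall>k\<ge>K. \<forall>i. \<forall>x\<in>Y. \<forall>y\<in>Y.
                   agree_on (V i k) x y \<longrightarrow> \<bar>phi i x - phi i y\<bar> \<le> r/2"
      using unif[of "r/2"] r by auto
    show "\<exists>no. \<forall>n\<ge>no. norm (inf_nbhd phi V Y i n x - phi i x) < r"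
    proof (intro exI allI impI)
      fix n assume n: "K \<le> n"
      have xin: "x \<in> {y \<in> Y. agree_on (V i n) y x}" using that agree_on_refl by auto
      have up: "inf_nbhd phi V Y i n x \<le> phi i x" unfolding inf_nbhd_def
        using xin bdd by (intro cInf_lower) auto
      have lo: "phi i x - r/2 \<le> inf_nbhd phi V Y i n x" unfolding inf_nbhd_def
      proof (rule cInf_greatest)
        show "phi i ` {y \<in> Y. agree_on (V i n) y x} \<noteq> {}" using xin by blast
      next
        fix z assume "z \<in> phi i ` {y \<in> Y. agree_on (V i n) y x}"
        then obtain y where y: "y \<in> Y" "agree_on (V i n) y x" "z = phi i y" by auto
        then have "\<bar>phi i y - phi i x\<bar> \<le> r/2" using K n that by blast
        then show "phi i x - r/2 \<le> z" using y by linarith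
      qed
      show "norm (inf_nbhd phi V Y i n x - phi i x) < r" using up lo r by simp
    qed
  qed
  have prodeq: "lam i k * (Delta phi V Y i k x / lam i k) = Delta phi V Y i k x"
    if "x \<in> config_space \<inter> Y" for i k x
  proof (cases "lam i k = 0")
    case True
    have "ereal (Delta phi V Y i k x) \<le> (SUP x\<in>config_space \<inter> Y. ereal (Delta phi V Y i k x))"
      using that by (rule SUP_upper)
    then have "Delta phi V Y i k x \<le> 0" using lam_zero[OF True] by simp
    then show ?thesis using Dnonneg[of i k x] True by simp
  qed simp
  show ?thesis unfolding kalikow_decomposition_def
  proof (intro allI conjI ballI)
    fix i k show "0 \<le> lam i k" by (rule lam_nonneg)
  next
    fix i show "lam i sums 1" by (rule lam_prob)
  next
    fix i k show "cylindrical_on (\<lambda>x. Delta phi V Y i k x / lam i k) (V i k)"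
      unfolding cylindrical_on_def using Dcyl by auto
  next
    fix i k x show "0 \<le> Delta phi V Y i k x / lam i k"
      using Dnonneg lam_nonneg by simp
  next
    fix i x assume x: "x \<in> config_space \<inter> Y"
    have "(\<lambda>k. Delta phi V Y i k x) sums phi i x"
      unfolding sums_def
    proof (rule LIMSEQ_imp_Suc)
      have "x \<in> Y" using x by blast
      then have "(\<lambda>n. \<Sum>k<Suc n. Delta phi V Y i k x) = (\<lambda>n. inf_nbhd phi V Y i n x)"
        using tele by blast
      then show "(\<lambda>n. \<Sum>k<Suc n. Delta phi V Y i k x) \<longlonglongrightarrow> phi i x"
        using conv[OF \<open>x \<in> Y\<close>] by simp
    qed
    then show "(\<lambda>k. lam i k * (Delta phi V Y i k x / lam i k)) sums phi i x"
      using prodeq[OF x] by simp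
  qed
qed

end
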